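(* Let $\Omega$, $\Upsilon$, $\Gamma$ be finite sets, $n=|\Omega|$, and let $f\colon\Omega\to\Upsilon$ and $g\colon\Omega\to\Gamma$ be surjective. Let $V_\Omega=\mathbb{R}^\Omega$, let $V_\Upsilon\le V_\Omega$ be the subspace of vectors $v$ with $v(\omega)$ depending only on $f(\omega)$, and $V_\Gamma\le V_\Omega$ the subspace of vectors with $v(\omega)$ depending only on $g(\omega)$. Let $\mathcal{P}$, $\mathcal{Q}$, $\mathcal{R}$ be orthogonal decompositions of $V_\Omega$, $V_\Upsilon$, $V_\Gamma$, respectively, each containing the matrix $\mathbf{P}_0=\mathbf{Q}_0=\mathbf{R}_0=n^{-1}\mathbf{J}$. Write $\mathbf{I}_{\mathcal{Q}}=\sum_{\mathbf{Q}\in\mathcal{Q}}\mathbf{Q}$ and $\mathbf{I}_{\mathcal{R}}=\sum_{\mathbf{R}\in\mathcal{R}}\mathbf{R}$. Suppose $\mathcal{Q}$ is structure balanced in relation to $\mathcal{P}$, and let $\mathbf{P}\in\mathcal{P}\setminus\{\mathbf{P}_0\}$. Then the following are equivalent: (i) $(\mathbf{P}\vartriangleright\mathbf{Q})\mathbf{I}_{\mathcal{R}}=\mathbf{0}$ for all $\mathbf{Q}\in\mathcal{Q}$ with $\lambda_{\mathbf{PQ}}\neq0$; (ii) $\mathbf{QPR}=\mathbf{0}$ for all $\mathbf{Q}\in\mathcal{Q}$ and all $\mathbf{R}\in\mathcal{R}$; (iii) $\mathbf{I}_{\mathcal{Q}}\mathbf{P}\mathbf{I}_{\mathcal{R}}=\mathbf{0}$.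 Moreover, if these conditions hold for every $\mathbf{P}\in\mathcal{P}\setminus\{\mathbf{P}_0\}$, then $V_\Upsilon\cap V_0^\perp$ is orthogonal to $V_\Gamma\cap V_0^\perp$ (where $V_0$ is the space of constant vectors), and for every $\upsilon\in\Upsilon$ and $\gamma\in\Gamma$ there exists $\omega\in\Omega$ with $f(\omega)=\upsilon$ and $g(\omega)=\gamma$.
   Context: $\mathbf{J}$ is the $n\times n$ all-ones matrix. $V_\Omega$ carries the standard inner product; all matrices are $\Omega\times\Omega$. An orthogonal decomposition of a subspace $W\le V_\Omega$ is a finite set of nonzero symmetric idempotent matrices that are mutually orthogonal and whose sum is the orthogonal projector onto $W$. For projectors $\mathbf{A},\mathbf{B}$: $\mathbf{B}$ has first-order balance in relation to $\mathbf{A}$ if $\mathbf{BAB}=\lambda_{\mathbf{AB}}\mathbf{B}$ for a scalar $\lambda_{\mathbf{AB}}$ (efficiency factor); if $\lambda_{\mathbf{AB}}\ne0$, $\mathbf{A}\vartriangleright\mathbf{B}=\lambda_{\mathbf{AB}}^{-1}\mathbf{ABA}$. $\mathcal{Q}$ is structure balanced in relation to $\mathcal{P}$ if every $\mathbf{Q}\in\mathcal{Q}$ has first-order balance in relation to every $\mathbf{P}\in\mathcal{P}$, and $\mathbf{Q}_1\mathbf{P}\mathbf{Q}_2=\mathbf{0}$ for all $\mathbf{P}\in\mathcal{P}$ and all distinct $\mathbf{Q}_1,\mathbf{Q}_2\in\mathcal{Q}$. *)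

theory Defs
  imports "HOL-Analysis.Analysis"
begin

text \<open>Matrices indexed by a finite type 'o (playing the role of Omega).\<close>

definition all_ones :: "real ^ 'o ^ 'o" where
  "all_ones = (\<chi> i j. 1)"

definition orth_proj_onto :: "real ^ 'o ^ 'o \<Rightarrow> (real ^ 'o) set \<Rightarrow> bool" where
  "orth_proj_onto M W \<longleftrightarrow> transpose M = M \<and> M ** M = M \<and> range (\<lambda>v. M *v v) = W"

definition orth_decomp :: "(real ^ 'o ^ 'o) set \<Rightarrow> (real ^ 'o) set \<Rightarrow> bool" where
  "orth_decomp D W \<longleftrightarrow> finite D \<and>
     (\<forall>A\<in>D. A \<noteq> 0 \<and> transpose A = A \<and> A ** A = A) \<and>
     (\<forall>A\<in>D. \<forall>B\<in>D. A \<noteq> B \<longrightarrow> A ** B = 0) \<and>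
     orth_proj_onto (\<Sum>A\<in>D. A) W"

definition first_order_balance :: "real ^ 'o ^ 'o \<Rightarrow> real ^ 'o ^ 'o \<Rightarrow> bool" where
  "first_order_balance B A \<longleftrightarrow> (\<exists>l. B ** A ** B = l *\<^sub>R B)"

text \<open>Efficiency factor lambda_AB (well defined when B is nonzero and balanced).\<close>
definition eff :: "real ^ 'o ^ 'o \<Rightarrow> real ^ 'o ^ 'o \<Rightarrow> real" where
  "eff A B = (SOME l. B ** A ** B = l *\<^sub>R B)"

definition tri :: "real ^ 'o ^ 'o \<Rightarrow> real ^ 'o ^ 'o \<Rightarrow> real ^ 'o ^ 'o" where
  "tri A B = (inverse (eff A B)) *\<^sub>R (A ** B ** A)"

definition structure_balanced :: "(real ^ 'o ^ 'o) set \<Rightarrow> (real ^ 'o ^ 'o) set \<Rightarrow> bool" where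
  "structure_balanced Q P \<longleftrightarrow>
     (\<forall>q\<in>Q. \<forall>p\<in>P. first_order_balance q p) \<and>
     (\<forall>p\<in>P. \<forall>q1\<in>Q. \<forall>q2\<in>Q. q1 \<noteq> q2 \<longrightarrow> q1 ** p ** q2 = 0)"

definition factor_space :: "('o \<Rightarrow> 'u) \<Rightarrow> (real ^ 'o) set" where
  "factor_space f = {v. \<forall>x y. f x = f y \<longrightarrow> v $ x = v $ y}"

definition const_space :: "(real ^ 'o) set" where
  "const_space = {v. \<forall>x y. v $ x = v $ y}"

definition orth_compl :: "(real ^ 'o) set \<Rightarrow> (real ^ 'o) set" where
  "orth_compl W = {v. \<forall>w\<in>W. inner v w = 0}"

end

theory Submission
  imports Defs
begin


lemma mm_sum_left: "finite S \<Longrightarrow> (\<Sum>x\<in>S. f x) ** (B::real^'n^'n) = (\<Sum>x\<in>S. f x ** B)"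
  by (induction S rule: finite_induct)
     (simp_all add: vec_eq_iff matrix_matrix_mult_def sum.distrib algebra_simps)

lemma mm_sum_right: "finite S \<Longrightarrow> (B::real^'n^'n) ** (\<Sum>x\<in>S. f x) = (\<Sum>x\<in>S. B ** f x)"
  by (induction S rule: finite_induct) (simp_all add: matrix_add_ldistrib)

lemma mm_scaleR_left: "(c *\<^sub>R (A::real^'n^'n)) ** B = c *\<^sub>R (A ** B)"
  by (simp add: vec_eq_iff matrix_matrix_mult_def sum_distrib_left mult.assoc)

lemma mtm_zero:
  fixes M :: "real^'n^'n"
  assumes "transpose M ** M = 0" shows "M = 0"
proof -
  have "\<And>i. inner (column i M) (column i M) = 0"
  proof -
    fix i
    have "(transpose M ** M) $ i $ i = 0" using assms by simp
    thus "inner (column i M) (column i M) = 0"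
      by (simp add: matrix_mult_transpose_dot_column)
  qed
  hence "\<And>i. column i M = 0" by simp
  hence "\<And>i j. M $ j $ i = 0" by (metis column_def vec_lambda_beta zero_index)
  thus ?thesis by (simp add: vec_eq_iff)
qed

lemma decomp_props:
  assumes "orth_decomp D W"
  shows "finite D" "\<And>A. A \<in> D \<Longrightarrow> transpose A = A" "\<And>A. A \<in> D \<Longrightarrow> A ** A = A"
    "\<And>A B. A \<in> D \<Longrightarrow> B \<in> D \<Longrightarrow> A \<noteq> B \<Longrightarrow> A ** B = 0"
    "transpose (\<Sum>D) = (\<Sum>D)" "(\<Sum>D) ** (\<Sum>D) = (\<Sum>D)" "range (\<lambda>v. (\<Sum>D) *v v) = W"
  using assms unfolding orth_decomp_def orth_proj_onto_def by auto

lemma decomp_absorb: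
  assumes "orth_decomp D W" "A \<in> D"
  shows "A ** (\<Sum>D) = A" "(\<Sum>D) ** A = A"
proof -
  note d = decomp_props[OF assms(1)]
  have "A ** (\<Sum>D) = (\<Sum>B\<in>D. A ** B)" using d(1) mm_sum_right[of D A "\<lambda>x. x"] by simp
  also have "\<dots> = A ** A + (\<Sum>B\<in>D-{A}. A ** B)" using d(1) assms(2) by (simp add: sum.remove)
  also have "(\<Sum>B\<in>D-{A}. A ** B) = 0" using d(4) assms(2) by (intro sum.neutral) auto
  finally show "A ** (\<Sum>D) = A" using d(3) assms(2) by simp
  have "(\<Sum>D) ** A = (\<Sum>B\<in>D. B ** A)" using d(1) mm_sum_left[of D "\<lambda>x. x" A] by simp
  also have "\<dots> = A ** A + (\<Sum>B\<in>D-{A}. B ** A)" using d(1) assms(2) by (simp add: sum.remove)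
  also have "(\<Sum>B\<in>D-{A}. B ** A) = 0" using d(4) assms(2) by (intro sum.neutral) auto
  finally show "(\<Sum>D) ** A = A" using d(3) assms(2) by simp
qed

lemma proj_fix:
  assumes "orth_decomp D W" "x \<in> W" shows "(\<Sum>D) *v x = x"
proof -
  note d = decomp_props[OF assms(1)]
  obtain w where "x = (\<Sum>D) *v w" using d(7) assms(2) by auto
  thus ?thesis using d(6) by (simp add: matrix_vector_mul_assoc)
qed

lemma inner_sym_mat:
  fixes A :: "real^'n^'n"
  assumes "transpose A = A" shows "inner (A *v x) y = inner x (A *v y)"
proof -
  have "A *v x = x v* transpose A" by simp
  thus ?thesis using assms dot_lmul_matrix by metis
qed

lemma decomp_univ:
  assumes "orth_decomp D (UNIV::(real^'n) set)" shows "(\<Sum>D) = mat 1"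
proof -
  have "\<And>x. (\<Sum>D) *v x = x" using proj_fix[OF assms] by simp
  thus ?thesis by (simp add: matrix_eq)
qed

lemma eff_eq:
  assumes "first_order_balance Q P" shows "Q ** P ** Q = eff P Q *\<^sub>R Q"
  using assms unfolding first_order_balance_def eff_def by (rule someI_ex)

lemma part1:
  fixes P :: "real^'o^'o" and QQ RR :: "(real^'o^'o) set"
  assumes dQ: "orth_decomp QQ WQ" and dR: "orth_decomp RR WR"
    and Ps: "transpose P = P" and Pi: "P ** P = P"
    and bal: "\<forall>Q\<in>QQ. first_order_balance Q P"
  shows "((\<forall>Q\<in>QQ. eff P Q \<noteq> 0 \<longrightarrow> tri P Q ** (\<Sum>R\<in>RR. R) = 0)
               \<longleftrightarrow> (\<forall>Q\<in>QQ. \<forall>R\<in>RR. Q ** P ** R = 0))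
          \<and> ((\<forall>Q\<in>QQ. \<forall>R\<in>RR. Q ** P ** R = 0)
               \<longleftrightarrow> (\<Sum>Q\<in>QQ. Q) ** P ** (\<Sum>R\<in>RR. R) = 0)"
proof -
  note q = decomp_props[OF dQ] and r = decomp_props[OF dR]
  define IR where "IR = (\<Sum>R\<in>RR. R)"
  define IQ where "IQ = (\<Sum>Q\<in>QQ. Q)"
  have IRs: "transpose IR = IR" using r(5) by (simp add: IR_def)
  have QPIR: "Q ** P ** IR = (\<Sum>R\<in>RR. Q ** P ** R)" for Q :: "real^'o^'o"
    unfolding IR_def using r(1) mm_sum_right[of RR "Q ** P" "\<lambda>x. x"] by (simp add: matrix_mul_assoc)
  have i_ii: "(\<forall>Q\<in>QQ. eff P Q \<noteq> 0 \<longrightarrow> tri P Q ** IR = 0)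
               \<longleftrightarrow> (\<forall>Q\<in>QQ. \<forall>R\<in>RR. Q ** P ** R = 0)"
  proof
    assume ii: "\<forall>Q\<in>QQ. \<forall>R\<in>RR. Q ** P ** R = 0"
    show "\<forall>Q\<in>QQ. eff P Q \<noteq> 0 \<longrightarrow> tri P Q ** IR = 0"
    proof (intro ballI impI)
      fix Q assume Q: "Q \<in> QQ"
      have "Q ** P ** IR = 0" using QPIR ii Q by simp
      hence "P ** (Q ** P ** IR) = 0" by simp
      thus "tri P Q ** IR = 0" unfolding tri_def mm_scaleR_left by (simp add: matrix_mul_assoc)
    qed
  next
    assume i: "\<forall>Q\<in>QQ. eff P Q \<noteq> 0 \<longrightarrow> tri P Q ** IR = 0"
    show "\<forall>Q\<in>QQ. \<forall>R\<in>RR. Q ** P ** R = 0"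
    proof (intro ballI)
      fix Q R assume Q: "Q \<in> QQ" and R: "R \<in> RR"
      have Qs: "transpose Q = Q" and Qi: "Q ** Q = Q" using q Q by auto
      have M0: "Q ** P ** IR = 0"
      proof (cases "eff P Q = 0")
        case True
        have "Q ** P ** Q = 0" using eff_eq[of Q P] bal Q True by simp
        hence "transpose (P ** Q) ** (P ** Q) = 0" using Ps Qs Pi
          by (simp add: matrix_transpose_mul matrix_mul_assoc)
             (metis matrix_mul_assoc)
        hence "P ** Q = 0" by (rule mtm_zero)
        hence "Q ** P = 0" using Ps Qs by (metis matrix_transpose_mul transpose_iff times0_left
           matrix_transpose_mul)
        thus ?thesis by simp
      next
        case False
        have "tri P Q ** IR = 0" using i Q False by simp
        hence "inverse (eff P Q) *\<^sub>R (P ** Q ** P ** IR) = 0"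
          unfolding tri_def mm_scaleR_left by simp
        hence PQPIR: "P ** Q ** P ** IR = 0" using False by simp
        have "transpose (Q ** P ** IR) ** (Q ** P ** IR) = IR ** (P ** Q ** Q ** P ** IR)"
          using Ps Qs IRs by (simp add: matrix_transpose_mul matrix_mul_assoc)
        also have "\<dots> = 0" using Qi PQPIR by (simp add: matrix_mul_assoc[symmetric])
        finally show ?thesis by (rule mtm_zero)
      qed
      have "Q ** P ** R = Q ** P ** (IR ** R)" using decomp_absorb(2)[OF dR R] by (simp add: IR_def)
      also have "\<dots> = 0" using M0 by (simp add: matrix_mul_assoc)
      finally show "Q ** P ** R = 0" .
    qed
  qed
  have ii_iii: "(\<forall>Q\<in>QQ. \<forall>R\<in>RR. Q ** P ** R = 0) \<longleftrightarrow> IQ ** P ** IR = 0"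
  proof
    assume ii: "\<forall>Q\<in>QQ. \<forall>R\<in>RR. Q ** P ** R = 0"
    have "IQ ** P ** IR = (\<Sum>Q\<in>QQ. Q ** P ** IR)"
      unfolding IQ_def using q(1) mm_sum_left[of QQ "\<lambda>x. x" P] mm_sum_left[of QQ "\<lambda>x. x ** P" IR]
      by simp
    also have "\<dots> = 0" using QPIR ii by (intro sum.neutral) simp
    finally show "IQ ** P ** IR = 0" .
  next
    assume iii: "IQ ** P ** IR = 0"
    show "\<forall>Q\<in>QQ. \<forall>R\<in>RR. Q ** P ** R = 0"
    proof (intro ballI)
      fix Q R assume Q: "Q \<in> QQ" and R: "R \<in> RR"
      have "Q ** P ** R = (Q ** IQ) ** P ** (IR ** R)"
        using decomp_absorb(1)[OF dQ Q] decomp_absorb(2)[OF dR R] by (simp add: IR_def IQ_def)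
      also have "\<dots> = Q ** (IQ ** P ** IR) ** R" by (simp add: matrix_mul_assoc)
      also have "\<dots> = 0" using iii by simp
      finally show "Q ** P ** R = 0" .
    qed
  qed
  show ?thesis using i_ii ii_iii by (simp add: IR_def IQ_def)
qed

lemma part2:
  fixes f :: "'o::finite \<Rightarrow> 'u::finite" and g :: "'o \<Rightarrow> 'g::finite"
    and PP QQ RR :: "(real ^ 'o ^ 'o) set"
  assumes "surj f" and "surj g"
    and dP: "orth_decomp PP (UNIV :: (real ^ 'o) set)"
    and dQ: "orth_decomp QQ (factor_space f)"
    and dR: "orth_decomp RR (factor_space g)"
    and P0P: "(inverse (real CARD('o))) *\<^sub>R all_ones \<in> PP"
    and P0Q: "(inverse (real CARD('o))) *\<^sub>R all_ones \<in> QQ"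
    and P0R: "(inverse (real CARD('o))) *\<^sub>R all_ones \<in> RR"
    and H: "\<forall>P \<in> PP - {(inverse (real CARD('o))) *\<^sub>R all_ones}.
              (\<Sum>Q\<in>QQ. Q) ** P ** (\<Sum>R\<in>RR. R) = 0"
  shows "(\<forall>x\<in>factor_space f \<inter> orth_compl const_space.
                 \<forall>y\<in>factor_space g \<inter> orth_compl const_space. inner x y = 0)
             \<and> (\<forall>u v. \<exists>w. f w = u \<and> g w = v)"
proof -
  define P0 :: "real^'o^'o" where "P0 = (inverse (real CARD('o))) *\<^sub>R all_ones"
  define IR where "IR = (\<Sum>R\<in>RR. R)"
  define IQ where "IQ = (\<Sum>Q\<in>QQ. Q)"
  note p = decomp_props[OF dP] and q = decomp_props[OF dQ] and r = decomp_props[OF dR]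
  have "IQ ** IR = IQ ** (\<Sum>P\<in>PP. P) ** IR" using decomp_univ[OF dP] by simp
  also have "\<dots> = (\<Sum>P\<in>PP. IQ ** P ** IR)"
    using p(1) mm_sum_right[of PP IQ "\<lambda>x. x"] mm_sum_left[of PP "\<lambda>x. IQ ** x" IR] by simp
  also have "\<dots> = IQ ** P0 ** IR + (\<Sum>P\<in>PP-{P0}. IQ ** P ** IR)"
    using p(1) P0P by (simp add: sum.remove P0_def)
  also have "(\<Sum>P\<in>PP-{P0}. IQ ** P ** IR) = 0" using H by (intro sum.neutral) (simp add: P0_def IQ_def IR_def)
  also have "IQ ** P0 ** IR = P0"
    using decomp_absorb(2)[OF dQ P0Q] decomp_absorb(1)[OF dR P0R] by (simp add: P0_def IQ_def IR_def)
  finally have IQIR: "IQ ** IR = P0" by simp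
  have key: "inner x y = inner x (P0 *v y)" if x: "x \<in> factor_space f" and y: "y \<in> factor_space g" for x y
  proof -
    have "inner x y = inner (IQ *v x) (IR *v y)"
      using proj_fix[OF dQ x] proj_fix[OF dR y] by (simp add: IQ_def IR_def)
    also have "\<dots> = inner x (IQ *v (IR *v y))" using inner_sym_mat q(5) by (simp add: IQ_def)
    also have "\<dots> = inner x (P0 *v y)" by (simp add: matrix_vector_mul_assoc IQIR)
    finally show ?thesis .
  qed
  have P0v: "(P0 *v y) $ i = (\<Sum>j\<in>UNIV. inverse (real CARD('o)) * y $ j)" for y i
    by (simp add: P0_def all_ones_def matrix_vector_mult_def)
  have A: "\<forall>x\<in>factor_space f \<inter> orth_compl const_space.
                 \<forall>y\<in>factor_space g \<inter> orth_compl const_space. inner x y = 0"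
  proof (intro ballI)
    fix x y assume x: "x \<in> factor_space f \<inter> orth_compl const_space"
      and y: "y \<in> factor_space g \<inter> orth_compl const_space"
    have "P0 *v y \<in> const_space" by (simp add: const_space_def P0v)
    hence "inner x (P0 *v y) = 0" using x by (simp add: orth_compl_def)
    thus "inner x y = 0" using key x y by simp
  qed
  have B: "\<exists>w. f w = u \<and> g w = v" for u v
  proof (rule ccontr)
    assume nw: "\<not> (\<exists>w. f w = u \<and> g w = v)"
    define x :: "real^'o" where "x = (\<chi> w. if f w = u then 1 else 0)"
    define y :: "real^'o" where "y = (\<chi> w. if g w = v then 1 else 0)"
    have xf: "x \<in> factor_space f" by (simp add: factor_space_def x_def)
    have yg: "y \<in> factor_space g" by (simp add: factor_space_def y_def)
    have "inner x y = 0" using nw unfolding inner_vec_def x_def y_def by (intro sum.neutral) auto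
    obtain i0 where i0: "f i0 = u" using assms(1) by (metis surjD)
    obtain j0 where j0: "g j0 = v" using assms(2) by (metis surjD)
    define c where "c = (\<Sum>j\<in>UNIV. inverse (real CARD('o)) * y $ j)"
    have "inverse (real CARD('o)) * y $ j0 \<le> c"
      unfolding c_def by (rule member_le_sum) (auto simp: y_def)
    moreover have "inverse (real CARD('o)) * y $ j0 > 0" using j0 by (simp add: y_def)
    ultimately have cpos: "c > 0" by linarith
    have "inner x (P0 *v y) = (\<Sum>i\<in>UNIV. x $ i * c)" by (simp add: inner_vec_def P0v c_def)
    also have "\<dots> \<ge> x $ i0 * c" by (rule member_le_sum) (use cpos in \<open>auto simp: x_def\<close>)
    finally have "inner x (P0 *v y) > 0" using cpos i0 by (simp add: x_def)
    thus False using key[OF xf yg] \<open>inner x y = 0\<close> by simp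
  qed
  show ?thesis using A B by blast
qed

theorem lemma1:
  fixes f :: "'o::finite \<Rightarrow> 'u::finite" and g :: "'o \<Rightarrow> 'g::finite"
    and PP QQ RR :: "(real ^ 'o ^ 'o) set"
  assumes "surj f" and "surj g"
    and "orth_decomp PP (UNIV :: (real ^ 'o) set)"
    and "orth_decomp QQ (factor_space f)"
    and "orth_decomp RR (factor_space g)"
    and "(inverse (real CARD('o))) *\<^sub>R all_ones \<in> PP"
    and "(inverse (real CARD('o))) *\<^sub>R all_ones \<in> QQ"
    and "(inverse (real CARD('o))) *\<^sub>R all_ones \<in> RR"
    and "structure_balanced QQ PP"
  shows "(\<forall>P \<in> PP - {(inverse (real CARD('o))) *\<^sub>R all_ones}.
            ((\<forall>Q\<in>QQ. eff P Q \<noteq> 0 \<longrightarrow> tri P Q ** (\<Sum>R\<in>RR. R) = 0)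
               \<longleftrightarrow> (\<forall>Q\<in>QQ. \<forall>R\<in>RR. Q ** P ** R = 0))
          \<and> ((\<forall>Q\<in>QQ. \<forall>R\<in>RR. Q ** P ** R = 0)
               \<longleftrightarrow> (\<Sum>Q\<in>QQ. Q) ** P ** (\<Sum>R\<in>RR. R) = 0))
       \<and> ((\<forall>P \<in> PP - {(inverse (real CARD('o))) *\<^sub>R all_ones}.
              (\<forall>Q\<in>QQ. eff P Q \<noteq> 0 \<longrightarrow> tri P Q ** (\<Sum>R\<in>RR. R) = 0)
            \<and> (\<forall>Q\<in>QQ. \<forall>R\<in>RR. Q ** P ** R = 0)
            \<and> (\<Sum>Q\<in>QQ. Q) ** P ** (\<Sum>R\<in>RR. R) = 0)
          \<longrightarrow> (\<forall>x\<in>factor_space f \<inter> orth_compl const_space.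
                 \<forall>y\<in>factor_space g \<inter> orth_compl const_space. inner x y = 0)
             \<and> (\<forall>u v. \<exists>w. f w = u \<and> g w = v))"
proof -
  note dP = assms(3) and dQ = assms(4) and dR = assms(5)
  have b: "\<forall>Q\<in>QQ. first_order_balance Q P" if "P \<in> PP" for P
    using assms(9) that unfolding structure_balanced_def by blast
  have P1: "\<forall>P \<in> PP - {(inverse (real CARD('o))) *\<^sub>R all_ones}.
            ((\<forall>Q\<in>QQ. eff P Q \<noteq> 0 \<longrightarrow> tri P Q ** (\<Sum>R\<in>RR. R) = 0)
               \<longleftrightarrow> (\<forall>Q\<in>QQ. \<forall>R\<in>RR. Q ** P ** R = 0))
          \<and> ((\<forall>Q\<in>QQ. \<forall>R\<in>RR. Q ** P ** R = 0)
               \<longleftrightarrow> (\<Sum>Q\<in>QQ. Q) ** P ** (\<Sum>R\<in>RR. R) = 0)"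
  proof
    fix P assume "P \<in> PP - {(inverse (real CARD('o))) *\<^sub>R all_ones}"
    hence PP: "P \<in> PP" by simp
    show "((\<forall>Q\<in>QQ. eff P Q \<noteq> 0 \<longrightarrow> tri P Q ** (\<Sum>R\<in>RR. R) = 0)
               \<longleftrightarrow> (\<forall>Q\<in>QQ. \<forall>R\<in>RR. Q ** P ** R = 0))
          \<and> ((\<forall>Q\<in>QQ. \<forall>R\<in>RR. Q ** P ** R = 0)
               \<longleftrightarrow> (\<Sum>Q\<in>QQ. Q) ** P ** (\<Sum>R\<in>RR. R) = 0)"
      by (rule part1[OF dQ dR]) (use decomp_props[OF dP] PP b[OF PP] in auto)
  qed
  show ?thesis
  proof (intro conjI impI)
    show "\<forall>P \<in> PP - {(inverse (real CARD('o))) *\<^sub>R all_ones}.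
            ((\<forall>Q\<in>QQ. eff P Q \<noteq> 0 \<longrightarrow> tri P Q ** (\<Sum>R\<in>RR. R) = 0)
               \<longleftrightarrow> (\<forall>Q\<in>QQ. \<forall>R\<in>RR. Q ** P ** R = 0))
          \<and> ((\<forall>Q\<in>QQ. \<forall>R\<in>RR. Q ** P ** R = 0)
               \<longleftrightarrow> (\<Sum>Q\<in>QQ. Q) ** P ** (\<Sum>R\<in>RR. R) = 0)" by (rule P1)
  next
    assume H: "\<forall>P \<in> PP - {(inverse (real CARD('o))) *\<^sub>R all_ones}.
              (\<forall>Q\<in>QQ. eff P Q \<noteq> 0 \<longrightarrow> tri P Q ** (\<Sum>R\<in>RR. R) = 0)
            \<and> (\<forall>Q\<in>QQ. \<forall>R\<in>RR. Q ** P ** R = 0)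
            \<and> (\<Sum>Q\<in>QQ. Q) ** P ** (\<Sum>R\<in>RR. R) = 0"
    have r: "(\<forall>x\<in>factor_space f \<inter> orth_compl const_space.
                 \<forall>y\<in>factor_space g \<inter> orth_compl const_space. inner x y = 0)
             \<and> (\<forall>u v. \<exists>w. f w = u \<and> g w = v)"
      by (rule part2[OF assms(1-8)]) (use H in blast)
    thus "\<forall>x\<in>factor_space f \<inter> orth_compl const_space.
                 \<forall>y\<in>factor_space g \<inter> orth_compl const_space. inner x y = 0" by blast
    show "\<forall>u v. \<exists>w. f w = u \<and> g w = v" using r by blast
  qed
qed

end
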